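(* Let $\Omega\subset\mathbb{R}^N$ be open and bounded, $\alpha\in(0,N)$, $q\in(1,\infty]$, $f\in L^{N/\alpha,q}(\Omega)$ (extended by zero outside $\Omega$), and let $\frac12(N/\alpha+1)\le p<N/\alpha$ and $\delta:=N/p-\alpha>0$. Then for every $\epsilon \in (0,\alpha)$ and every $x\in\mathbb{R}^N$, \[ |I_{\alpha}f(x)|\leq C_4\, \mathcal{M}_{\alpha-\epsilon}f(x)^{\frac{\delta}{\delta+\epsilon }}\,\|f\|_{L^{p,1}(\mathbb{R}^N)}^{\frac{\epsilon }{\epsilon+\delta}} \] for some constant $C_4=C_4(N,\alpha,\epsilon)>0$ independent of $\delta$ (and hence of $p$).
   Context: The Riesz potential is $I_\alpha f(x) = \frac{1}{\gamma(\alpha)}\int_{\mathbb{R}^N} \frac{f(y)}{|x-y|^{N-\alpha}}\,dy$, $\gamma(\alpha)=\pi^{N/2}2^{\alpha}\Gamma(\alpha/2)\Gamma((N-\alpha)/2)^{-1}$. The fractional maximal function is $\mathcal{M}_{\gamma}f(x)=\sup_{r>0}r^{\gamma}\fint_{B(x,r)}|f(y)|\,dy$. For a measurable $f$ on $\mathbb{R}^N$ let $f^*$ be its non-increasing rearrangement and $f^{**}(x)=\frac1x\int_0^x f^*(t)\,dt$; for $1<p<\infty$, $1\le q<\infty$, $\|f\|_{L^{p,q}(\mathbb{R}^N)} = (\int_0^\infty [t^{1/p}f^{**}(t)]^q\,\frac{dt}{t})^{1/q}$, $\|f\|_{L^{p,\infty}(\mathbb{R}^N)}=\sup_{t>0}t^{1/p}f^{**}(t)$,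 and $\|f\|_{L^{p,q}(\Omega)}:=\|f\chi_\Omega\|_{L^{p,q}(\mathbb{R}^N)}$. *)

theory Defs
  imports "HOL-Analysis.Analysis"
begin

text \<open>Real powers of extended nonnegative reals (only used with positive exponents):
  infinity to a positive power is infinity.\<close>
definition epowr :: "ennreal \<Rightarrow> real \<Rightarrow> ennreal" where
  "epowr x r = (if x = \<infinity> then \<infinity> else ennreal (enn2real x powr r))"

definition riesz_const :: "real \<Rightarrow> real \<Rightarrow> real" where
  "riesz_const N \<alpha> = pi powr (N / 2) * 2 powr \<alpha> * Gamma (\<alpha> / 2) / Gamma ((N - \<alpha>) / 2)"

definition riesz_potential :: "real \<Rightarrow> ('a::euclidean_space \<Rightarrow> real) \<Rightarrow> 'a \<Rightarrow> real" where
  "riesz_potential \<alpha> f x =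
     (1 / riesz_const (real DIM('a)) \<alpha>) *
     (\<integral> y. f y / norm (x - y) powr (real DIM('a) - \<alpha>) \<partial>lborel)"

definition frac_maximal :: "real \<Rightarrow> ('a::euclidean_space \<Rightarrow> real) \<Rightarrow> 'a \<Rightarrow> ennreal" where
  "frac_maximal \<gamma> f x =
     (SUP r\<in>{0<..}. ennreal (r powr \<gamma>) *
        ((\<integral>\<^sup>+ y\<in>ball x r. ennreal \<bar>f y\<bar> \<partial>lborel) / emeasure lborel (ball x r)))"

definition rearr :: "('a::euclidean_space \<Rightarrow> real) \<Rightarrow> real \<Rightarrow> ennreal" where
  "rearr f t = Inf {s::ennreal. emeasure lborel {x. ennreal \<bar>f x\<bar> > s} \<le> ennreal t}"

definition rearr2 :: "('a::euclidean_space \<Rightarrow> real) \<Rightarrow> real \<Rightarrow> ennreal" where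
  "rearr2 f t = ennreal (1 / t) * (\<integral>\<^sup>+ s\<in>{0<..<t}. rearr f s \<partial>lborel)"

definition lorentz_norm :: "real \<Rightarrow> ennreal \<Rightarrow> ('a::euclidean_space \<Rightarrow> real) \<Rightarrow> ennreal" where
  "lorentz_norm p q f =
     (if q = \<infinity> then (SUP t\<in>{0<..}. ennreal (t powr (1 / p)) * rearr2 f t)
      else epowr (\<integral>\<^sup>+ t\<in>{0<..}. epowr (ennreal (t powr (1 / p)) * rearr2 f t) (enn2real q)
                     * ennreal (1 / t) \<partial>lborel) (1 / enn2real q))"

end

theory Submission
  imports Defs "HOL-Analysis.Analysis"
begin

lemma emeasure_layer:
  fixes v :: ennreal
  shows "emeasure lborel {\<sigma>::real. 0 \<le> \<sigma> \<and> ennreal \<sigma> < v} = v"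
proof (cases "v = \<infinity>")
  case True
  then have "{\<sigma>::real. 0 \<le> \<sigma> \<and> ennreal \<sigma> < v} = {0..}" by auto
  have "emeasure lborel {0::real..} = \<infinity>"
  proof (rule ccontr)
    assume "emeasure lborel {0::real..} \<noteq> \<infinity>"
    then obtain r where r: "emeasure lborel {0::real..} = ennreal r" "0 \<le> r"
      by (cases "emeasure lborel {0::real..}") auto
    have "emeasure lborel {0::real..r+1} \<le> emeasure lborel {0::real..}"
      by (intro emeasure_mono) auto
    then show False using r by (simp add: ennreal_le_iff)
  qed
  then show ?thesis using True \<open>_ = {0..}\<close> by simp
next
  case False
  then obtain r where r: "v = ennreal r" "0 \<le> r" by (cases v) auto
  then have "{\<sigma>::real. 0 \<le> \<sigma> \<and> ennreal \<sigma> < v} = {0..<r}"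
    by (auto simp: ennreal_less_iff)
  then show ?thesis using r by simp
qed

lemma emeasure_min_set:
  fixes m :: ennreal and t :: real
  assumes "0 \<le> t"
  shows "emeasure lborel {s::real. 0 < s \<and> s < t \<and> ennreal s < m} = min (ennreal t) m"
proof (cases "m = \<infinity>")
  case True
  then have "{s::real. 0 < s \<and> s < t \<and> ennreal s < m} = {0<..<t}" by auto
  then show ?thesis using True assms by simp
next
  case False
  then obtain r where r: "m = ennreal r" "0 \<le> r" by (cases m) auto
  then have "{s::real. 0 < s \<and> s < t \<and> ennreal s < m} = {0<..<min t r}"
    by (auto simp: ennreal_less_iff)
  then show ?thesis using r assms by (simp add: min_def ennreal_leI)
qed

lemma rearr_less_iff:
  fixes f :: "'a::euclidean_space \<Rightarrow> real"
  assumes f[measurable]: "f \<in> borel_measurable lborel" and \<sigma>: "0 \<le> \<sigma>"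
  shows "ennreal \<sigma> < rearr f s \<longleftrightarrow> ennreal s < emeasure lborel {x. ennreal \<sigma> < ennreal \<bar>f x\<bar>}"
proof
  assume "ennreal \<sigma> < rearr f s"
  show "ennreal s < emeasure lborel {x. ennreal \<sigma> < ennreal \<bar>f x\<bar>}"
  proof (rule ccontr)
    assume "\<not> ?thesis"
    then have "ennreal \<sigma> \<in> {s'. emeasure lborel {x. ennreal \<bar>f x\<bar> > s'} \<le> ennreal s}"
      by (simp add: not_less)
    then have "rearr f s \<le> ennreal \<sigma>" unfolding rearr_def by (rule Inf_lower)
    with \<open>ennreal \<sigma> < rearr f s\<close> show False by simp
  qed
next
  assume H: "ennreal s < emeasure lborel {x. ennreal \<sigma> < ennreal \<bar>f x\<bar>}"
  define A where "A n = {x. \<sigma> + 1 / Suc n < \<bar>f x\<bar>}" for n :: nat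
  have Am[measurable]: "A n \<in> sets lborel" for n unfolding A_def by measurable
  have inc: "incseq A"
  proof (rule incseq_SucI)
    fix n
    have "1 / real (Suc (Suc n)) \<le> 1 / Suc n" by (simp add: frac_le)
    then show "A n \<subseteq> A (Suc n)" unfolding A_def by auto
  qed
  have U: "(\<Union>n. A n) = {x. ennreal \<sigma> < ennreal \<bar>f x\<bar>}"
  proof safe
    fix x n assume "x \<in> A n"
    then have "\<sigma> < \<bar>f x\<bar>" unfolding A_def
      by (smt (verit) of_nat_0_less_iff zero_less_Suc divide_pos_pos mem_Collect_eq)
    then show "ennreal \<sigma> < ennreal \<bar>f x\<bar>" using \<sigma> by (simp add: ennreal_less_iff)
  next
    fix x assume "ennreal \<sigma> < ennreal \<bar>f x\<bar>"
    then have "\<sigma> < \<bar>f x\<bar>" using \<sigma> by (simp add: ennreal_less_iff)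
    then obtain n where "1 / real (Suc n) < \<bar>f x\<bar> - \<sigma>"
      using nat_approx_posE[of "\<bar>f x\<bar> - \<sigma>"] by auto
    then have "\<sigma> + 1 / Suc n < \<bar>f x\<bar>" by linarith
    then show "x \<in> (\<Union>n. A n)" unfolding A_def by blast
  qed
  have "(SUP n. emeasure lborel (A n)) = emeasure lborel {x. ennreal \<sigma> < ennreal \<bar>f x\<bar>}"
    using SUP_emeasure_incseq[of A lborel] inc U Am by auto
  with H obtain n where n: "ennreal s < emeasure lborel (A n)"
    by (metis less_SUP_iff)
  have "ennreal (\<sigma> + 1 / Suc n) \<le> rearr f s"
    unfolding rearr_def
  proof (rule Inf_greatest)
    fix \<tau> assume "\<tau> \<in> {s'. emeasure lborel {x. ennreal \<bar>f x\<bar> > s'} \<le> ennreal s}"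
    then have \<tau>: "emeasure lborel {x. ennreal \<bar>f x\<bar> > \<tau>} \<le> ennreal s" by simp
    show "ennreal (\<sigma> + 1 / Suc n) \<le> \<tau>"
    proof (rule ccontr)
      assume "\<not> ?thesis"
      then have "\<tau> < ennreal (\<sigma> + 1 / Suc n)" by simp
      have "A n \<subseteq> {x. ennreal \<bar>f x\<bar> > \<tau>}"
      proof
        fix x assume "x \<in> A n"
        then have "ennreal (\<sigma> + 1 / Suc n) < ennreal \<bar>f x\<bar>"
          unfolding A_def using \<sigma> by (subst ennreal_less_iff) auto
        with \<open>\<tau> < _\<close> show "x \<in> {x. ennreal \<bar>f x\<bar> > \<tau>}" by simp
      qed
      then have "emeasure lborel (A n) \<le> emeasure lborel {x. ennreal \<bar>f x\<bar> > \<tau>}"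
        by (intro emeasure_mono) measurable
      with \<tau> n show False by simp
    qed
  qed
  moreover have "ennreal \<sigma> < ennreal (\<sigma> + 1 / Suc n)" using \<sigma> by (subst ennreal_less_iff) auto
  ultimately show "ennreal \<sigma> < rearr f s" by simp
qed

lemma set_meas: "{s::real. 0 < s \<and> s < t \<and> ennreal s < m} \<in> sets lborel"
  by measurable

lemma psf: "pair_sigma_finite (lborel::'a::euclidean_space measure) (lborel :: 'b::euclidean_space measure)"
  by (simp add: pair_sigma_finite_def lborel.sigma_finite_measure_axioms)

lemma ennreal_less_rat_iff:
  fixes m :: ennreal and s :: real
  shows "ennreal s < m \<longleftrightarrow> (\<exists>q::rat. s < of_rat q \<and> ennreal (of_rat q) < m)"
proof
  assume H: "ennreal s < m"
  show "\<exists>q::rat. s < of_rat q \<and> ennreal (of_rat q) < m"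
  proof (cases "m = \<infinity>")
    case True
    obtain r where "r \<in> \<rat>" "s < r" "r < s + 1" using Rats_dense_in_real[of s "s+1"] by auto
    then obtain q where "r = of_rat q" by (auto elim: Rats_cases)
    then show ?thesis using True \<open>s < r\<close> by auto
  next
    case False
    then obtain r where r: "m = ennreal r" "0 \<le> r" by (cases m) auto
    have "max s 0 < r"
    proof (cases "s < 0")
      case True
      then have "ennreal s = 0" by (simp add: ennreal_neg)
      with H r have "0 < r" by simp
      with True show ?thesis by simp
    next
      case False
      with H r show ?thesis by (simp add: ennreal_less_iff)
    qed
    then obtain x where "x \<in> \<rat>" "max s 0 < x" "x < r" using Rats_dense_in_real by blast
    then obtain q where "x = of_rat q" by (auto elim: Rats_cases)
    then show ?thesis using \<open>max s 0 < x\<close> \<open>x < r\<close> r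
      by (intro exI[of _ q]) (auto simp: ennreal_less_iff)
  qed
next
  assume "\<exists>q::rat. s < of_rat q \<and> ennreal (of_rat q) < m"
  then obtain q where "s < of_rat q" "ennreal (of_rat q) < m" by blast
  moreover have "ennreal s \<le> ennreal (of_rat q)" using \<open>s < of_rat q\<close> by (intro ennreal_leI) simp
  ultimately show "ennreal s < m" by simp
qed

lemma antitone_level_borel:
  fixes \<mu> :: "real \<Rightarrow> ennreal"
  assumes mono: "\<And>a b. a \<le> b \<Longrightarrow> \<mu> b \<le> \<mu> a"
  shows "{\<sigma>. c < \<mu> \<sigma>} \<in> sets borel"
proof -
  define g where "g \<sigma> = (if c < \<mu> \<sigma> then 0 else 1::real)" for \<sigma>
  have "mono g" unfolding g_def mono_def using mono
    by (auto simp: not_less) (meson order_le_less_trans not_less mono)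
  then have gm: "g \<in> borel_measurable borel" by (rule borel_measurable_mono)
  have "{\<sigma>. c < \<mu> \<sigma>} = g -` {0} \<inter> space borel" unfolding g_def by (auto split: if_splits)
  also have "\<dots> \<in> sets borel" using gm by (intro measurable_sets) auto
  finally show ?thesis .
qed

lemma key_rearr:
  fixes f :: "'a::euclidean_space \<Rightarrow> real"
  assumes f[measurable]: "f \<in> borel_measurable lborel" and E[measurable]: "E \<in> sets lborel"
    and Et: "emeasure lborel E \<le> ennreal t" and t: "0 < t"
  shows "(\<integral>\<^sup>+y. indicator E y * ennreal \<bar>f y\<bar> \<partial>lborel) \<le> (\<integral>\<^sup>+s\<in>{0<..<t}. rearr f s \<partial>lborel)"
proof -
  define \<mu> where "\<mu> \<sigma> = emeasure lborel {x. ennreal \<sigma> < ennreal \<bar>f x\<bar>}" for \<sigma> :: real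
  have \<mu>mono: "\<mu> b \<le> \<mu> a" if "a \<le> b" for a b
    unfolding \<mu>_def using ennreal_leI[OF that] by (intro emeasure_mono) (auto intro: le_less_trans)
  have lev[measurable]: "{\<sigma>. c < \<mu> \<sigma>} \<in> sets borel" for c
    by (rule antitone_level_borel) (rule \<mu>mono)
  have "(\<integral>\<^sup>+y. indicator E y * ennreal \<bar>f y\<bar> \<partial>lborel)
      = (\<integral>\<^sup>+y. (\<integral>\<^sup>+\<sigma>. indicator E y * indicator {\<sigma>. 0 \<le> \<sigma> \<and> \<sigma> < \<bar>f y\<bar>} \<sigma> \<partial>lborel) \<partial>lborel)"
  proof (intro nn_integral_cong)
    fix y :: 'a
    have "{\<sigma>. 0 \<le> \<sigma> \<and> \<sigma> < \<bar>f y\<bar>} = {0..<\<bar>f y\<bar>}" by auto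
    then show "indicator E y * ennreal \<bar>f y\<bar> = (\<integral>\<^sup>+\<sigma>. indicator E y * indicator {\<sigma>. 0 \<le> \<sigma> \<and> \<sigma> < \<bar>f y\<bar>} \<sigma> \<partial>lborel)"
      by (simp add: nn_integral_cmult)
  qed
  also have "\<dots> = (\<integral>\<^sup>+\<sigma>. (\<integral>\<^sup>+y. indicator E y * indicator {\<sigma>. 0 \<le> \<sigma> \<and> \<sigma> < \<bar>f y\<bar>} \<sigma> \<partial>lborel) \<partial>lborel)"
    by (rule pair_sigma_finite.Fubini'[OF psf, symmetric]) measurable
  also have "\<dots> \<le> (\<integral>\<^sup>+\<sigma>. (\<integral>\<^sup>+s. indicator {(s,\<sigma>). 0 < s \<and> s < t \<and> 0 \<le> \<sigma> \<and> ennreal s < \<mu> \<sigma>} (s,\<sigma>) \<partial>lborel) \<partial>lborel)"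
  proof (intro nn_integral_mono)
    fix \<sigma> :: real
    show "(\<integral>\<^sup>+y. indicator E y * indicator {\<sigma>. 0 \<le> \<sigma> \<and> \<sigma> < \<bar>f y\<bar>} \<sigma> \<partial>lborel)
        \<le> (\<integral>\<^sup>+s. indicator {(s,\<sigma>). 0 < s \<and> s < t \<and> 0 \<le> \<sigma> \<and> ennreal s < \<mu> \<sigma>} (s,\<sigma>) \<partial>lborel)"
    proof (cases "0 \<le> \<sigma>")
      case False
      then show ?thesis by simp
    next
      case True
      have "(\<integral>\<^sup>+y. indicator E y * indicator {\<sigma>. 0 \<le> \<sigma> \<and> \<sigma> < \<bar>f y\<bar>} \<sigma> \<partial>lborel)
          = (\<integral>\<^sup>+y. indicator (E \<inter> {y. \<sigma> < \<bar>f y\<bar>}) y \<partial>lborel)"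
        using True by (intro nn_integral_cong) (auto simp: indicator_def)
      also have "\<dots> = emeasure lborel (E \<inter> {y. \<sigma> < \<bar>f y\<bar>})" by simp
      also have "\<dots> \<le> min (ennreal t) (\<mu> \<sigma>)"
      proof -
        have "emeasure lborel (E \<inter> {y. \<sigma> < \<bar>f y\<bar>}) \<le> emeasure lborel E" using E by (intro emeasure_mono) auto
        moreover have "emeasure lborel (E \<inter> {y. \<sigma> < \<bar>f y\<bar>}) \<le> \<mu> \<sigma>"
          unfolding \<mu>_def using True by (intro emeasure_mono) (auto simp: ennreal_less_iff)
        ultimately show ?thesis using Et by simp
      qed
      also have "\<dots> = emeasure lborel {s::real. 0 < s \<and> s < t \<and> ennreal s < \<mu> \<sigma>}"
        using t by (simp add: emeasure_min_set)
      also have "\<dots> = (\<integral>\<^sup>+s. indicator {(s,\<sigma>). 0 < s \<and> s < t \<and> 0 \<le> \<sigma> \<and> ennreal s < \<mu> \<sigma>} (s,\<sigma>) \<partial>lborel)"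
        apply (subst nn_integral_indicator[symmetric])
         apply (rule set_meas)
        apply (rule nn_integral_cong)
        using True apply (simp add: indicator_def)
        done
      finally show ?thesis .
    qed
  qed
  also have "\<dots> = (\<integral>\<^sup>+s. (\<integral>\<^sup>+\<sigma>. indicator {(s,\<sigma>). 0 < s \<and> s < t \<and> 0 \<le> \<sigma> \<and> ennreal s < \<mu> \<sigma>} (s,\<sigma>) \<partial>lborel) \<partial>lborel)"
  proof (rule pair_sigma_finite.Fubini'[OF psf])
    define D where "D q = {\<sigma>. ennreal (of_rat q) < \<mu> \<sigma>}" for q :: rat
    have Dm[measurable]: "D q \<in> sets borel" for q unfolding D_def by (rule lev)
    have eq: "{(s,\<sigma>). 0 < s \<and> s < t \<and> 0 \<le> \<sigma> \<and> ennreal s < \<mu> \<sigma>}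
       = {p. 0 < fst p \<and> fst p < t \<and> 0 \<le> snd p \<and> (\<exists>q::rat. fst p < of_rat q \<and> snd p \<in> D q)}"
    proof (rule set_eqI)
      fix p :: "real \<times> real"
      obtain s \<sigma> where p: "p = (s, \<sigma>)" by (cases p)
      have "ennreal s < \<mu> \<sigma> \<longleftrightarrow> (\<exists>q::rat. s < of_rat q \<and> \<sigma> \<in> D q)"
        unfolding D_def mem_Collect_eq by (rule ennreal_less_rat_iff)
      then show "p \<in> {(s,\<sigma>). 0 < s \<and> s < t \<and> 0 \<le> \<sigma> \<and> ennreal s < \<mu> \<sigma>} \<longleftrightarrow>
          p \<in> {p. 0 < fst p \<and> fst p < t \<and> 0 \<le> snd p \<and> (\<exists>q::rat. fst p < of_rat q \<and> snd p \<in> D q)}"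
        unfolding p by simp
    qed
    have "Measurable.pred (lborel \<Otimes>\<^sub>M lborel) (\<lambda>p::real\<times>real. 0 < fst p \<and> fst p < t \<and> 0 \<le> snd p \<and> (\<exists>q::rat. fst p < of_rat q \<and> snd p \<in> D q))"
      by measurable
    then have "{p. 0 < fst p \<and> fst p < t \<and> 0 \<le> snd p \<and> (\<exists>q::rat. fst p < of_rat q \<and> snd p \<in> D q)} \<in> sets (lborel \<Otimes>\<^sub>M lborel)"
      by (simp add: pred_def space_pair_measure)
    then show "case_prod (\<lambda>s \<sigma>. indicator {(s,\<sigma>). 0 < s \<and> s < t \<and> 0 \<le> \<sigma> \<and> ennreal s < \<mu> \<sigma>} (s,\<sigma>)) \<in> borel_measurable (lborel \<Otimes>\<^sub>M lborel)"
      unfolding eq by simp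
  qed
  also have "\<dots> = (\<integral>\<^sup>+s. rearr f s * indicator {0<..<t} s \<partial>lborel)"
  proof (intro nn_integral_cong)
    fix s :: real
    show "(\<integral>\<^sup>+\<sigma>. indicator {(s,\<sigma>). 0 < s \<and> s < t \<and> 0 \<le> \<sigma> \<and> ennreal s < \<mu> \<sigma>} (s,\<sigma>) \<partial>lborel) = rearr f s * indicator {0<..<t} s"
    proof (cases "0 < s \<and> s < t")
      case False
      then show ?thesis by (auto simp: indicator_def)
    next
      case True
      have "(\<integral>\<^sup>+\<sigma>. indicator {(s,\<sigma>). 0 < s \<and> s < t \<and> 0 \<le> \<sigma> \<and> ennreal s < \<mu> \<sigma>} (s,\<sigma>) \<partial>lborel)
          = (\<integral>\<^sup>+\<sigma>. indicator {\<sigma>::real. 0 \<le> \<sigma> \<and> ennreal \<sigma> < rearr f s} \<sigma> \<partial>lborel)"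
        using True by (intro nn_integral_cong) (auto simp: indicator_def \<mu>_def rearr_less_iff[OF f])
      also have "\<dots> = rearr f s"
        by (subst nn_integral_indicator) (measurable, rule emeasure_layer)
      finally show ?thesis using True by simp
    qed
  qed
  finally show ?thesis by simp
qed

lemma epowr_one: "epowr z 1 = z"
  by (cases z) (auto simp: epowr_def powr_one)

lemma epowr_ennreal: "0 \<le> m \<Longrightarrow> epowr (ennreal m) \<theta> = ennreal (m powr \<theta>)"
  by (simp add: epowr_def)

lemma nn_powr_to_inf:
  assumes m: "0 < m" and e: "e < -1"
  shows "(\<integral>\<^sup>+t. ennreal (t powr e) * indicator {m<..} t \<partial>lborel) = ennreal (- (m powr (e+1)) / (e+1))"
proof -
  have "((\<lambda>t. t powr e) has_integral -(m powr (e+1))/(e+1)) {m..}"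
    by (rule has_integral_powr_to_inf) (use assms in auto)
  then have "((\<lambda>t. if t \<in> {m..} then t powr e else 0) has_integral -(m powr (e+1))/(e+1)) UNIV"
    by (subst has_integral_restrict_UNIV)
  then have "(\<integral>\<^sup>+t. ennreal (if t \<in> {m..} then t powr e else 0) \<partial>lborel) = ennreal (-(m powr (e+1))/(e+1))"
    by (intro nn_integral_has_integral_lborel) auto
  moreover have "(\<integral>\<^sup>+t. ennreal (t powr e) * indicator {m<..} t \<partial>lborel) = (\<integral>\<^sup>+t. ennreal (if t \<in> {m..} then t powr e else 0) \<partial>lborel)"
    by (intro nn_integral_cong_AE) (use AE_lborel_singleton[of m] in \<open>auto elim!: eventually_mono simp: indicator_def\<close>)
  ultimately show ?thesis by simp
qed

lemma nn_powr_from_0: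
  assumes e: "-1 < e" and T: "0 \<le> T"
  shows "(\<integral>\<^sup>+t. ennreal (t powr e) * indicator {0<..T} t \<partial>lborel) = ennreal (T powr (e+1) / (e+1))"
proof -
  have "((\<lambda>t. t powr e) has_integral T powr (e+1)/(e+1)) {0..T}"
    by (rule has_integral_powr_from_0) (use assms in auto)
  then have "((\<lambda>t. if t \<in> {0..T} then t powr e else 0) has_integral T powr (e+1)/(e+1)) UNIV"
    by (subst has_integral_restrict_UNIV)
  then have "(\<integral>\<^sup>+t. ennreal (if t \<in> {0..T} then t powr e else 0) \<partial>lborel) = ennreal (T powr (e+1)/(e+1))"
    by (intro nn_integral_has_integral_lborel) auto
  moreover have "(\<integral>\<^sup>+t. ennreal (t powr e) * indicator {0<..T} t \<partial>lborel) = (\<integral>\<^sup>+t. ennreal (if t \<in> {0..T} then t powr e else 0) \<partial>lborel)"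
    by (intro nn_integral_cong_AE) (use AE_lborel_singleton[of 0] in \<open>auto elim!: eventually_mono simp: indicator_def\<close>)
  ultimately show ?thesis by simp
qed

lemma opt_real:
  fixes K1 K2 e1 e2 m l :: real
  assumes K: "0 < K1" "0 < K2" and e: "0 < e1" "0 < e2" and ml: "0 < m" "0 < l"
  defines "T \<equiv> (K2 * l / (K1 * m)) powr (1 / (e1 + e2))"
  shows "K1 * T powr e1 * m + K2 * T powr (-e2) * l \<le> 2 * max K1 K2 * (m powr (e2/(e1+e2)) * l powr (e1/(e1+e2)))"
proof -
  define A where "A = K1 * m"
  define B where "B = K2 * l"
  define \<theta> where "\<theta> = e2 / (e1 + e2)"
  have A: "0 < A" and B: "0 < B" using K ml by (auto simp: A_def B_def)
  have th: "e1 / (e1 + e2) = 1 - \<theta>" unfolding \<theta>_def using e by (simp add: field_simps)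
  have T1: "T powr e1 = (B / A) powr (1 - \<theta>)"
    unfolding T_def A_def B_def using e K ml by (simp add: powr_powr th[symmetric])
  have T2: "T powr (-e2) = (B / A) powr (- \<theta>)"
    unfolding T_def A_def B_def \<theta>_def using e K ml by (simp add: powr_powr)
  have eq1: "K1 * T powr e1 * m = A powr \<theta> * B powr (1 - \<theta>)"
  proof -
    have "K1 * T powr e1 * m = A * (B / A) powr (1 - \<theta>)" unfolding A_def T1 by simp
    also have "\<dots> = A powr 1 * (B powr (1 - \<theta>) / A powr (1 - \<theta>))" using A B by (simp add: powr_divide)
    also have "\<dots> = A powr (1 - (1 - \<theta>)) * B powr (1 - \<theta>)" using A by (simp add: powr_diff)
    finally show ?thesis by simp
  qed
  have eq2: "K2 * T powr (-e2) * l = A powr \<theta> * B powr (1 - \<theta>)"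
  proof -
    have "K2 * T powr (-e2) * l = B * (B / A) powr (- \<theta>)" unfolding B_def T2 by simp
    also have "\<dots> = B powr 1 * (B powr (- \<theta>) / A powr (- \<theta>))" using A B by (simp add: powr_divide)
    also have "\<dots> = B powr (1 - \<theta>) * A powr \<theta>" using A B by (simp add: powr_diff powr_minus divide_simps)
    finally show ?thesis by simp
  qed
  have th01: "0 \<le> \<theta>" "\<theta> \<le> 1" unfolding \<theta>_def using e by auto
  have "A powr \<theta> * B powr (1 - \<theta>) = (K1 powr \<theta> * K2 powr (1 - \<theta>)) * (m powr \<theta> * l powr (1 - \<theta>))"
    unfolding A_def B_def using K ml by (simp add: powr_mult)
  also have "\<dots> \<le> (max K1 K2 powr \<theta> * max K1 K2 powr (1 - \<theta>)) * (m powr \<theta> * l powr (1 - \<theta>))"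
    using K ml th01 by (intro mult_right_mono mult_mono powr_mono2) auto
  also have "max K1 K2 powr \<theta> * max K1 K2 powr (1 - \<theta>) = max K1 K2"
    using K by (simp add: powr_add[symmetric])
  finally have "A powr \<theta> * B powr (1 - \<theta>) \<le> max K1 K2 * (m powr \<theta> * l powr (1 - \<theta>))" .
  then show ?thesis unfolding eq1 eq2 th \<theta>_def by simp
qed

lemma optimize:
  fixes G M L :: ennreal and K1 K2 e1 e2 :: real
  assumes K: "0 < K1" "0 < K2" and e: "0 < e1" "0 < e2"
    and bound: "\<And>T. 0 < T \<Longrightarrow> G \<le> ennreal (K1 * T powr e1) * M + ennreal (K2 * T powr (-e2)) * L"
    and zero: "M = 0 \<or> L = 0 \<Longrightarrow> G = 0"
  shows "G \<le> ennreal (2 * max K1 K2) * epowr M (e2/(e1+e2)) * epowr L (e1/(e1+e2))"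
proof -
  have C: "0 < 2 * max K1 K2" using K by auto
  have pos: "0 < epowr Z r" if "Z \<noteq> 0" for Z r
    using that by (cases Z) (auto simp: epowr_def)
  show ?thesis
  proof (cases "M = 0 \<or> L = 0")
    case True
    then show ?thesis using zero by simp
  next
    case False
    then have M0: "M \<noteq> 0" and L0: "L \<noteq> 0" by auto
    show ?thesis
    proof (cases "M = \<infinity> \<or> L = \<infinity>")
      case True
      then have "epowr M (e2/(e1+e2)) = \<infinity> \<or> epowr L (e1/(e1+e2)) = \<infinity>" by (auto simp: epowr_def)
      moreover have "0 < epowr M (e2/(e1+e2))" "0 < epowr L (e1/(e1+e2))" using pos M0 L0 by auto
      moreover have "0 < ennreal (2 * max K1 K2)" using C by simp
      ultimately have "ennreal (2 * max K1 K2) * epowr M (e2/(e1+e2)) * epowr L (e1/(e1+e2)) = \<infinity>"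
        by (auto simp: ennreal_mult_eq_top_iff)
      then show ?thesis by simp
    next
      case False
      then obtain m l where m: "M = ennreal m" "0 \<le> m" and l: "L = ennreal l" "0 \<le> l"
        by (cases M; cases L) auto
      with M0 L0 have mp: "0 < m" and lp: "0 < l" by auto
      define T where "T = (K2 * l / (K1 * m)) powr (1 / (e1 + e2))"
      have T: "0 < T" unfolding T_def using K mp lp by simp
      have "G \<le> ennreal (K1 * T powr e1) * M + ennreal (K2 * T powr (-e2)) * L" using bound T by simp
      also have "\<dots> = ennreal (K1 * T powr e1 * m + K2 * T powr (-e2) * l)"
        using m l K T by (simp add: ennreal_mult ennreal_plus[symmetric])
      also have "\<dots> \<le> ennreal (2 * max K1 K2 * (m powr (e2/(e1+e2)) * l powr (e1/(e1+e2))))"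
        using opt_real[OF K e mp lp] unfolding T_def by (rule ennreal_leI)
      also have "\<dots> = ennreal (2 * max K1 K2) * epowr M (e2/(e1+e2)) * epowr L (e1/(e1+e2))"
        using m l C by (simp add: epowr_ennreal ennreal_mult mult.assoc)
      finally show ?thesis .
    qed
  qed
qed

lemma rho_pow:
  fixes t \<omega> :: real
  assumes "0 < t" "0 < \<omega>" "0 < n"
  shows "\<omega> * ((t / \<omega>) powr (1 / real n)) ^ n = t"
proof -
  have "((t / \<omega>) powr (1 / real n)) ^ n = ((t / \<omega>) powr (1 / real n)) powr (real n)"
    using assms by (simp add: powr_realpow)
  also have "\<dots> = t / \<omega>" using assms by (simp add: powr_powr)
  finally show ?thesis using assms by simp
qed

lemma rho_less_iff:
  fixes t \<omega> N d :: real
  assumes "0 < t" "0 < \<omega>" "0 < N" "0 \<le> d"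
  shows "d < (t / \<omega>) powr (1 / N) \<longleftrightarrow> \<omega> * d powr N < t"
proof -
  have "d < (t / \<omega>) powr (1 / N) \<longleftrightarrow> d powr N < ((t / \<omega>) powr (1 / N)) powr N"
  proof
    assume "d < (t / \<omega>) powr (1 / N)"
    then show "d powr N < ((t / \<omega>) powr (1 / N)) powr N" using powr_less_mono2[of N d] assms by auto
  next
    assume H: "d powr N < ((t / \<omega>) powr (1 / N)) powr N"
    show "d < (t / \<omega>) powr (1 / N)"
    proof (rule ccontr)
      assume "\<not> ?thesis"
      then have "((t / \<omega>) powr (1 / N)) powr N \<le> d powr N" using powr_mono2[of N "(t / \<omega>) powr (1 / N)" d] assms by auto
      with H show False by simp
    qed
  qed
  also have "((t / \<omega>) powr (1 / N)) powr N = t / \<omega>" using assms by (simp add: powr_powr)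
  also have "d powr N < t / \<omega> \<longleftrightarrow> \<omega> * d powr N < t" using assms by (simp add: field_simps)
  finally show ?thesis .
qed

lemma ball_bound:
  fixes f :: "'a::euclidean_space \<Rightarrow> real"
  assumes r: "0 < r"
  shows "(\<integral>\<^sup>+y\<in>ball x r. ennreal \<bar>f y\<bar> \<partial>lborel)
     \<le> ennreal (unit_ball_vol (real DIM('a)) * r ^ DIM('a) * r powr (-\<gamma>)) * frac_maximal \<gamma> f x"
proof -
  define I where "I = (\<integral>\<^sup>+y\<in>ball x r. ennreal \<bar>f y\<bar> \<partial>lborel)"
  define v where "v = unit_ball_vol (real DIM('a)) * r ^ DIM('a)"
  have v: "0 < v" unfolding v_def using r by simp
  have V: "emeasure lborel (ball x r) = ennreal v" unfolding v_def using r by (simp add: emeasure_ball)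
  have "ennreal (r powr \<gamma>) * (I / ennreal v) \<le> frac_maximal \<gamma> f x"
    unfolding frac_maximal_def I_def V[symmetric] using r by (intro SUP_upper2[of r]) auto
  then have "ennreal (v * r powr (-\<gamma>)) * (ennreal (r powr \<gamma>) * (I / ennreal v)) \<le> ennreal (v * r powr (-\<gamma>)) * frac_maximal \<gamma> f x"
    by (rule mult_left_mono) simp
  moreover have "ennreal (v * r powr (-\<gamma>)) * (ennreal (r powr \<gamma>) * (I / ennreal v)) = I"
  proof -
    have "ennreal (v * r powr (-\<gamma>)) * (ennreal (r powr \<gamma>) * (I / ennreal v)) = ennreal (v * (r powr (-\<gamma>) * r powr \<gamma>)) * (I / ennreal v)"
    proof -
      have "ennreal (v * (r powr (-\<gamma>) * r powr \<gamma>)) = ennreal (v * r powr (-\<gamma>)) * ennreal (r powr \<gamma>)"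
        using v by (subst ennreal_mult[symmetric]) (auto simp: mult.assoc)
      then show ?thesis by (simp add: mult.assoc)
    qed
    also have "r powr (-\<gamma>) * r powr \<gamma> = 1" using r by (simp add: powr_add[symmetric])
    also have "ennreal (v * 1) * (I / ennreal v) = I * ennreal v / ennreal v"
      by (simp add: ennreal_times_divide mult.commute)
    also have "\<dots> = I" using v by (intro mult_divide_eq_ennreal) auto
    finally show ?thesis .
  qed
  ultimately show ?thesis unfolding I_def v_def by simp
qed

lemma pointwise:
  fixes f :: "'a::euclidean_space \<Rightarrow> real" and x y :: 'a and \<alpha> :: real
  defines "N \<equiv> real DIM('a)" and "\<omega> \<equiv> unit_ball_vol (real DIM('a))"
  assumes \<alpha>: "0 < \<alpha>" "\<alpha> < N"
  shows "ennreal (\<bar>f y\<bar> / norm (x - y) powr (N - \<alpha>))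
    \<le> (\<integral>\<^sup>+t. ennreal (\<omega> powr (1 - \<alpha>/N) * (1 - \<alpha>/N) * t powr (\<alpha>/N - 2)) *
          (indicator {p. 0 < fst p \<and> dist x (snd p) < (fst p / \<omega>) powr (1/N)} (t, y) * ennreal \<bar>f y\<bar>) \<partial>lborel)"
proof (cases "y = x")
  case True
  then show ?thesis by simp
next
  case False
  have N: "0 < N" unfolding N_def by simp
  have \<omega>: "0 < \<omega>" unfolding \<omega>_def by simp
  define a where "a = \<alpha> / N"
  have a: "0 < a" "a < 1" unfolding a_def using \<alpha> N by (auto simp: field_simps)
  define c where "c = \<omega> powr (1 - a) * (1 - a)"
  have c: "0 < c" unfolding c_def using a \<omega> by simp
  define d where "d = norm (x - y)"
  have d: "0 < d" unfolding d_def using False by simp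
  define m where "m = \<omega> * d powr N"
  have m: "0 < m" unfolding m_def using d \<omega> by simp
  have ind: "indicator {p. 0 < fst p \<and> dist x (snd p) < (fst p / \<omega>) powr (1/N)} (t, y) = (indicator {m<..} t :: ennreal)" for t
  proof (cases "0 < t")
    case True
    have "dist x y < (t / \<omega>) powr (1/N) \<longleftrightarrow> m < t"
      unfolding m_def dist_norm d_def[symmetric] using rho_less_iff[OF True \<omega> N, of d] d by simp
    then show ?thesis using True by (simp add: indicator_def)
  next
    case False
    then show ?thesis using m by (simp add: indicator_def)
  qed
  have "(\<integral>\<^sup>+t. ennreal (\<omega> powr (1 - \<alpha>/N) * (1 - \<alpha>/N) * t powr (\<alpha>/N - 2)) *
          (indicator {p. 0 < fst p \<and> dist x (snd p) < (fst p / \<omega>) powr (1/N)} (t, y) * ennreal \<bar>f y\<bar>) \<partial>lborel)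
      = (\<integral>\<^sup>+t. (ennreal \<bar>f y\<bar> * ennreal c) * (ennreal (t powr (a - 2)) * indicator {m<..} t) \<partial>lborel)"
  proof (intro nn_integral_cong)
    fix t :: real
    have "ennreal (c * t powr (a - 2)) = ennreal c * ennreal (t powr (a - 2))"
      using c by (simp add: ennreal_mult)
    then show "ennreal (\<omega> powr (1 - \<alpha>/N) * (1 - \<alpha>/N) * t powr (\<alpha>/N - 2)) *
          (indicator {p. 0 < fst p \<and> dist x (snd p) < (fst p / \<omega>) powr (1/N)} (t, y) * ennreal \<bar>f y\<bar>)
        = (ennreal \<bar>f y\<bar> * ennreal c) * (ennreal (t powr (a - 2)) * indicator {m<..} t)"
      unfolding ind c_def a_def by (simp add: ac_simps)
  qed
  also have "\<dots> = (ennreal \<bar>f y\<bar> * ennreal c) * ennreal (- (m powr (a - 2 + 1)) / (a - 2 + 1))"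
    using m a by (subst nn_integral_cmult) (auto simp: nn_powr_to_inf)
  also have "\<dots> = ennreal (\<bar>f y\<bar> * (c * (- (m powr (a - 2 + 1)) / (a - 2 + 1))))"
  proof -
    define q where "q = - (m powr (a - 2 + 1)) / (a - 2 + 1)"
    have q: "0 \<le> q" unfolding q_def using a m by (simp add: divide_nonneg_neg)
    have "ennreal (\<bar>f y\<bar> * (c * q)) = ennreal \<bar>f y\<bar> * ennreal c * ennreal q"
      using c q by (simp add: ennreal_mult mult.assoc)
    then show ?thesis unfolding q_def by simp
  qed
  also have "c * (- (m powr (a - 2 + 1)) / (a - 2 + 1)) = d powr (\<alpha> - N)"
  proof -
    have "c * (- (m powr (a - 2 + 1)) / (a - 2 + 1)) = \<omega> powr (1 - a) * m powr (a - 1)"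
      unfolding c_def using a by (simp add: field_simps)
    also have "m powr (a - 1) = \<omega> powr (a - 1) * d powr (N * (a - 1))"
      unfolding m_def using \<omega> d by (simp add: powr_mult powr_powr)
    also have "N * (a - 1) = \<alpha> - N" unfolding a_def using N by (simp add: field_simps)
    also have "\<omega> powr (1 - a) * (\<omega> powr (a - 1) * d powr (\<alpha> - N)) = d powr (\<alpha> - N)"
      using \<omega> by (simp add: powr_add[symmetric] mult.assoc[symmetric])
    finally show ?thesis .
  qed
  also have "\<bar>f y\<bar> * d powr (\<alpha> - N) = \<bar>f y\<bar> / norm (x - y) powr (N - \<alpha>)"
    unfolding d_def using d by (simp add: powr_minus_divide[symmetric] divide_inverse powr_minus[symmetric] d_def)
  finally show ?thesis by simp
qed

lemma ennreal_mult3: "0 \<le> x \<Longrightarrow> 0 \<le> y \<Longrightarrow> 0 \<le> z \<Longrightarrow> ennreal (x * y * z) = ennreal x * ennreal y * ennreal z"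
  by (simp add: ennreal_mult)

lemma powr_times_self: "0 < (t::real) \<Longrightarrow> t powr x * t = t powr (x + 1)"
  by (simp add: powr_add)

lemma R1:
  fixes t \<omega> N \<alpha> \<epsilon> c :: real
  assumes "0 < t" "0 < \<omega>" "0 < N"
  shows "c * t powr (\<alpha> / N - 2) * (t * ((t / \<omega>) powr (1 / N)) powr (\<epsilon> - \<alpha>))
       = c * \<omega> powr ((\<alpha> - \<epsilon>) / N) * t powr (\<epsilon> / N - 1)"
proof -
  have "((t / \<omega>) powr (1 / N)) powr (\<epsilon> - \<alpha>) = t powr ((\<epsilon> - \<alpha>) / N) * \<omega> powr ((\<alpha> - \<epsilon>) / N)"
  proof -
    have "((t / \<omega>) powr (1 / N)) powr (\<epsilon> - \<alpha>) = (t / \<omega>) powr ((\<epsilon> - \<alpha>) / N)"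
      using assms by (simp add: powr_powr)
    also have "\<dots> = t powr ((\<epsilon> - \<alpha>) / N) / \<omega> powr ((\<epsilon> - \<alpha>) / N)"
      using assms by (simp add: powr_divide)
    also have "\<omega> powr ((\<epsilon> - \<alpha>) / N) = inverse (\<omega> powr ((\<alpha> - \<epsilon>) / N))"
      using assms by (simp add: powr_minus[symmetric] minus_divide_left)
    finally show ?thesis by (simp add: divide_inverse)
  qed
  moreover have "t powr (\<alpha> / N - 2) * t * t powr ((\<epsilon> - \<alpha>) / N) = t powr (\<epsilon> / N - 1)"
  proof -
    have "t powr (\<alpha> / N - 2) * t * t powr ((\<epsilon> - \<alpha>) / N) = t powr (\<alpha> / N - 2 + 1 + (\<epsilon> - \<alpha>) / N)"
      using assms by (simp only: powr_times_self powr_add)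
    also have "\<alpha> / N - 2 + 1 + (\<epsilon> - \<alpha>) / N = \<epsilon> / N - 1"
      using assms by (simp add: field_simps)
    finally show ?thesis .
  qed
  ultimately show ?thesis by (simp add: ac_simps)
qed

lemma R2:
  fixes t T a p c :: real
  assumes "0 < T" "T < t" "a < 1 / p" "0 < c"
  shows "1 / (c * T powr (a - 1 / p)) * (c * t powr (a - 2)) * t \<le> t powr (1 / p) * (1 / t)"
proof -
  have t: "0 < t" using assms by simp
  have "t powr (a - 1 / p) \<le> T powr (a - 1 / p)"
    using assms by (intro powr_mono2') auto
  have "1 / (c * T powr (a - 1 / p)) * (c * t powr (a - 2)) * t = t powr (a - 2) * t / T powr (a - 1 / p)"
    using assms by (simp add: field_simps)
  also have "t powr (a - 2) * t = t powr (a - 1 / p) * (t powr (1 / p) * (1 / t))"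
  proof -
    have "t powr (a - 2) * t = t powr (a - 2 + 1)" using t by (rule powr_times_self)
    also have "\<dots> = t powr ((a - 1 / p) + 1 / p + (-1))" by (simp add: algebra_simps)
    also have "\<dots> = t powr (a - 1 / p) * (t powr (1 / p) * (1 / t))"
    proof -
      have m1: "t powr (-1) = 1 / t" using t by (simp add: powr_minus_divide)
      have "t powr ((a - 1 / p) + 1 / p + (-1)) = t powr (a - 1 / p) * t powr (1 / p) * t powr (-1)"
        by (simp only: powr_add)
      then show ?thesis using m1 by (simp add: mult.assoc)
    qed
    finally show ?thesis .
  qed
  also have "t powr (a - 1 / p) * (t powr (1 / p) * (1 / t)) / T powr (a - 1 / p) \<le> t powr (1 / p) * (1 / t)"
    using \<open>t powr (a - 1 / p) \<le> T powr (a - 1 / p)\<close> assms t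
    by (simp add: divide_le_eq mult_right_mono)
  finally show ?thesis .
qed

definition KK2 :: "nat \<Rightarrow> real \<Rightarrow> real" where
  "KK2 n \<alpha> = unit_ball_vol (real n) powr (1 - \<alpha> / real n) * (1 - \<alpha> / real n)"

definition KK1 :: "nat \<Rightarrow> real \<Rightarrow> real \<Rightarrow> real" where
  "KK1 n \<alpha> \<epsilon> = KK2 n \<alpha> * unit_ball_vol (real n) powr ((\<alpha> - \<epsilon>) / real n) * (real n / \<epsilon>)"

lemma KK2_pos: "0 < n \<Longrightarrow> \<alpha> < real n \<Longrightarrow> 0 < KK2 n \<alpha>"
proof -
  assume n: "0 < n" and a: "\<alpha> < real n"
  have "0 < 1 - \<alpha> / real n" using n a by (simp add: field_simps)
  moreover have "0 < unit_ball_vol (real n)" by simp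
  then have "0 < unit_ball_vol (real n) powr (1 - \<alpha> / real n)" by (metis powr_gt_zero order_less_irrefl)
  ultimately show ?thesis unfolding KK2_def by (rule mult_pos_pos[rotated])
qed

lemma KK1_pos: "0 < n \<Longrightarrow> \<alpha> < real n \<Longrightarrow> 0 < \<epsilon> \<Longrightarrow> 0 < KK1 n \<alpha> \<epsilon>"
proof -
  assume H: "0 < n" "\<alpha> < real n" "0 < \<epsilon>"
  have u: "0 < unit_ball_vol (real n)" by simp
  then have "0 < unit_ball_vol (real n) powr ((\<alpha> - \<epsilon>) / real n)" by (metis powr_gt_zero order_less_irrefl)
  then show ?thesis unfolding KK1_def using KK2_pos[of n \<alpha>] H
    by (intro mult_pos_pos divide_pos_pos) auto
qed

lemma L_eq:
  "lorentz_norm p 1 f = (\<integral>\<^sup>+t. ennreal (t powr (1 / p)) * rearr2 f t * ennreal (1 / t) * indicator {0<..} t \<partial>lborel)"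
  unfolding lorentz_norm_def by (simp add: epowr_one)

lemma main_est:
  fixes f :: "'a::euclidean_space \<Rightarrow> real" and x :: 'a and \<alpha> \<epsilon> p :: real
  assumes f[measurable]: "f \<in> borel_measurable lborel" and \<alpha>: "0 < \<alpha>" "\<alpha> < real DIM('a)"
    and \<epsilon>: "0 < \<epsilon>" "\<epsilon> < \<alpha>" and p: "1 < p" "p < real DIM('a) / \<alpha>"
  defines "G \<equiv> \<integral>\<^sup>+y. ennreal (\<bar>f y\<bar> / norm (x - y) powr (real DIM('a) - \<alpha>)) \<partial>lborel"
    and "M \<equiv> frac_maximal (\<alpha> - \<epsilon>) f x" and "L \<equiv> lorentz_norm p 1 f"
  shows "\<And>T. 0 < T \<Longrightarrow> G \<le> ennreal (KK1 DIM('a) \<alpha> \<epsilon> * T powr (\<epsilon> / real DIM('a))) * M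
            + ennreal (KK2 DIM('a) \<alpha> * T powr (- ((real DIM('a) / p - \<alpha>) / real DIM('a)))) * L"
    and "M = 0 \<or> L = 0 \<Longrightarrow> G = 0"
    and "bounded \<Omega> \<Longrightarrow> (\<forall>y. y \<notin> \<Omega> \<longrightarrow> f y = 0) \<Longrightarrow> M < \<infinity> \<Longrightarrow> G < \<infinity>"
proof -
  define N where "N = real DIM('a)"
  define \<omega> where "\<omega> = unit_ball_vol (real DIM('a))"
  define a where "a = \<alpha> / N"
  define c where "c = KK2 DIM('a) \<alpha>"
  define \<rho> where "\<rho> t = (t / \<omega>) powr (1 / N)" for t
  define S where "S = {p::real \<times> 'a. 0 < fst p \<and> dist x (snd p) < \<rho> (fst p)}"
  define Fp where "Fp t = (\<integral>\<^sup>+y. indicator S (t, y) * ennreal \<bar>f y\<bar> \<partial>lborel)" for t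
  define \<Phi> where "\<Phi> t = ennreal (c * t powr (a - 2)) * Fp t" for t
  define H where "H t y = ennreal (c * t powr (a - 2)) * (indicator S (t, y) * ennreal \<bar>f y\<bar>)" for t y
  have N: "0 < N" unfolding N_def by simp
  have \<omega>: "0 < \<omega>" unfolding \<omega>_def by simp
  have a: "0 < a" "a < 1" unfolding a_def N_def using \<alpha> by (auto simp: field_simps)
  have c: "0 < c" unfolding c_def using \<alpha> by (intro KK2_pos) auto
  have c_eq: "c = \<omega> powr (1 - a) * (1 - a)" unfolding c_def KK2_def \<omega>_def a_def N_def ..
  have \<rho>pos: "0 < \<rho> t" if "0 < t" for t unfolding \<rho>_def using that \<omega> by simp
  have \<rho>pow: "\<omega> * \<rho> t ^ DIM('a) = t" if "0 < t" for t
    unfolding \<rho>_def N_def using rho_pow[OF that \<omega>, of "DIM('a)"] by simp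
  have Smeas[measurable]: "S \<in> sets (lborel \<Otimes>\<^sub>M lborel)"
  proof -
    have "Measurable.pred (lborel \<Otimes>\<^sub>M lborel) (\<lambda>p::real \<times> 'a. 0 < fst p \<and> dist x (snd p) < (fst p / \<omega>) powr (1 / N))"
      by measurable
    then show ?thesis unfolding S_def \<rho>_def by (simp add: pred_def space_pair_measure)
  qed
  have ind_meas[measurable]: "(\<lambda>y. indicator S (t, y) :: ennreal) \<in> borel_measurable lborel" for t
    by (rule measurable_Pair2[OF borel_measurable_indicator[OF Smeas]]) simp
  have Fp_meas[measurable]: "Fp \<in> borel_measurable lborel" unfolding Fp_def by measurable
  have \<Phi>_meas[measurable]: "\<Phi> \<in> borel_measurable lborel" unfolding \<Phi>_def by measurable
  have Fp_ball: "Fp t = (\<integral>\<^sup>+y\<in>ball x (\<rho> t). ennreal \<bar>f y\<bar> \<partial>lborel)" if "0 < t" for t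
    unfolding Fp_def using that by (intro nn_integral_cong) (auto simp: S_def indicator_def)
  have Fp_nonpos: "Fp t = 0" if "t \<le> 0" for t
    unfolding Fp_def S_def using that by simp
  have Fp_b1: "Fp t \<le> ennreal (t * \<rho> t powr (\<epsilon> - \<alpha>)) * M" if "0 < t" for t
    using ball_bound[OF \<rho>pos[OF that], of f x "\<alpha> - \<epsilon>"] \<rho>pow[OF that]
    unfolding Fp_ball[OF that] M_def \<omega>_def by simp
  have Fp_b2: "Fp t \<le> ennreal t * rearr2 f t" if "0 < t" for t
  proof -
    have "emeasure lborel (ball x (\<rho> t)) = ennreal t"
      using \<rho>pos[OF that] \<rho>pow[OF that] by (simp add: emeasure_ball \<omega>_def)
    then have "(\<integral>\<^sup>+y. indicator (ball x (\<rho> t)) y * ennreal \<bar>f y\<bar> \<partial>lborel) \<le> (\<integral>\<^sup>+s\<in>{0<..<t}. rearr f s \<partial>lborel)"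
      by (intro key_rearr[OF f _ _ that]) auto
    also have "\<dots> = ennreal t * rearr2 f t"
    proof -
      have "ennreal t * ennreal (1 / t) = 1" using that by (simp add: ennreal_mult[symmetric])
      then show ?thesis unfolding rearr2_def by (simp add: mult.assoc[symmetric])
    qed
    finally show ?thesis unfolding Fp_ball[OF that] by (simp add: mult.commute)
  qed
  have Fp_mono: "Fp t \<le> Fp t'" if "0 < t" "t \<le> t'" for t t'
  proof -
    have "\<rho> t \<le> \<rho> t'" unfolding \<rho>_def using that \<omega> N by (intro powr_mono2) (auto simp: divide_right_mono)
    then show ?thesis unfolding Fp_def using that
      by (intro nn_integral_mono) (auto simp: S_def indicator_def)
  qed
  have Fp_le_I: "Fp t \<le> (\<integral>\<^sup>+y. ennreal \<bar>f y\<bar> \<partial>lborel)" for t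
    unfolding Fp_def by (intro nn_integral_mono) (auto simp: indicator_def)
  have G_le: "G \<le> (\<integral>\<^sup>+t. \<Phi> t \<partial>lborel)"
  proof -
    have "G \<le> (\<integral>\<^sup>+y. (\<integral>\<^sup>+t. H t y \<partial>lborel) \<partial>lborel)"
      unfolding G_def
    proof (intro nn_integral_mono)
      fix y
      show "ennreal (\<bar>f y\<bar> / norm (x - y) powr (real DIM('a) - \<alpha>)) \<le> (\<integral>\<^sup>+t. H t y \<partial>lborel)"
        using pointwise[where f=f and x=x and y=y and \<alpha>=\<alpha>] \<alpha>
        unfolding H_def S_def \<rho>_def c_eq a_def N_def \<omega>_def by simp
    qed
    also have "\<dots> = (\<integral>\<^sup>+t. (\<integral>\<^sup>+y. H t y \<partial>lborel) \<partial>lborel)"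
      by (rule pair_sigma_finite.Fubini'[OF psf]) (unfold H_def, measurable)
    also have "\<dots> = (\<integral>\<^sup>+t. \<Phi> t \<partial>lborel)"
    proof (intro nn_integral_cong)
      fix t
      show "(\<integral>\<^sup>+y. H t y \<partial>lborel) = \<Phi> t"
        unfolding H_def \<Phi>_def Fp_def by (rule nn_integral_cmult) measurable
    qed
    finally show ?thesis .
  qed
  have Leq: "L = (\<integral>\<^sup>+t. ennreal (t powr (1 / p)) * rearr2 f t * ennreal (1 / t) * indicator {0<..} t \<partial>lborel)"
    unfolding L_def by (rule L_eq)
  have ap: "a < 1 / p" unfolding a_def N_def using p \<alpha> by (simp add: field_simps)
  show "G = 0" if "M = 0 \<or> L = 0"
  proof -
    have Fz: "Fp t = 0" for t
    proof (cases "t \<le> 0")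
      case True
      then show ?thesis by (rule Fp_nonpos)
    next
      case False
      then have t: "0 < t" by simp
      show ?thesis
      proof (cases "M = 0")
        case True
        then show ?thesis using Fp_b1[OF t] by simp
      next
        case False
        with that have L0: "L = 0" by simp
        define k where "k = (2 * t) powr (1 / p - 2)"
        have k: "0 < k" unfolding k_def using t by simp
        have "ennreal (k * t) * Fp t = (\<integral>\<^sup>+s. (ennreal k * Fp t) * indicator {t<..<2*t} s \<partial>lborel)"
          using t k by (subst nn_integral_cmult_indicator) (auto simp: ennreal_mult ac_simps)
        also have "\<dots> \<le> L"
          unfolding Leq
        proof (intro nn_integral_mono)
          fix s :: real
          show "(ennreal k * Fp t) * indicator {t<..<2*t} s
              \<le> ennreal (s powr (1 / p)) * rearr2 f s * ennreal (1 / s) * indicator {0<..} s"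
          proof (cases "t < s \<and> s < 2 * t")
            case False
            then show ?thesis by simp
          next
            case True
            then have s: "0 < s" using t by simp
            have "k \<le> s powr (1 / p - 2)" unfolding k_def
              using True t p by (intro powr_mono2') (auto simp: field_simps)
            then have "ennreal k * Fp t \<le> ennreal (s powr (1 / p - 2)) * Fp s"
              using Fp_mono[OF t, of s] True by (intro mult_mono) (auto intro: ennreal_leI)
            also have "\<dots> \<le> ennreal (s powr (1 / p - 2)) * (ennreal s * rearr2 f s)"
              using Fp_b2[OF s] by (rule mult_left_mono) simp
            also have "\<dots> = ennreal (s powr (1 / p - 2) * s) * rearr2 f s"
              using s by (simp add: ennreal_mult mult.assoc)
            also have "s powr (1 / p - 2) * s = s powr (1 / p) * (1 / s)"
            proof -
              have "s powr (1 / p - 2) * s = s powr (1 / p - 2 + 1)" using s by (rule powr_times_self)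
              also have "\<dots> = s powr (1 / p + (-1))" by (simp add: algebra_simps)
              also have "\<dots> = s powr (1 / p) * (1 / s)" using s by (simp only: powr_add) (simp add: powr_minus_divide)
              finally show ?thesis .
            qed
            also have "ennreal (s powr (1 / p) * (1 / s)) * rearr2 f s
                = ennreal (s powr (1 / p)) * rearr2 f s * ennreal (1 / s) * indicator {0<..} s"
            proof -
              have "ennreal (s powr (1 / p) * (1 / s)) = ennreal (s powr (1 / p)) * ennreal (1 / s)"
                by (rule ennreal_mult) (use s in auto)
              then show ?thesis using s by (simp only: ac_simps) simp
            qed
            finally show ?thesis using True by simp
          qed
        qed
        finally have "ennreal (k * t) * Fp t \<le> 0" using L0 by simp
        moreover have "0 < k * t" using k t by simp
        ultimately show ?thesis using k t by (simp add: ennreal_mult)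
      qed
    qed
    have "G \<le> (\<integral>\<^sup>+t. \<Phi> t \<partial>lborel)" by (rule G_le)
    also have "\<dots> = 0" unfolding \<Phi>_def Fz by simp
    finally show ?thesis by simp
  qed
  have split: "(\<integral>\<^sup>+t. \<Phi> t \<partial>lborel) = (\<integral>\<^sup>+t. \<Phi> t * indicator {..T} t \<partial>lborel) + (\<integral>\<^sup>+t. \<Phi> t * indicator {T<..} t \<partial>lborel)" for T
  proof -
    have "(\<integral>\<^sup>+t. \<Phi> t \<partial>lborel) = (\<integral>\<^sup>+t. \<Phi> t * indicator {..T} t + \<Phi> t * indicator {T<..} t \<partial>lborel)"
      by (intro nn_integral_cong) (auto simp: indicator_def)
    also have "\<dots> = (\<integral>\<^sup>+t. \<Phi> t * indicator {..T} t \<partial>lborel) + (\<integral>\<^sup>+t. \<Phi> t * indicator {T<..} t \<partial>lborel)"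
      by (rule nn_integral_add) measurable
    finally show ?thesis .
  qed
  have part1: "(\<integral>\<^sup>+t. \<Phi> t * indicator {..T} t \<partial>lborel) \<le> ennreal (KK1 DIM('a) \<alpha> \<epsilon> * T powr (\<epsilon> / N)) * M"
    if T: "0 < T" for T
  proof -
    define K where "K = c * \<omega> powr ((\<alpha> - \<epsilon>) / N)"
    have K: "0 < K" unfolding K_def using c \<omega> by simp
    have "(\<integral>\<^sup>+t. \<Phi> t * indicator {..T} t \<partial>lborel)
        \<le> (\<integral>\<^sup>+t. (ennreal K * M) * (ennreal (t powr (\<epsilon> / N - 1)) * indicator {0<..T} t) \<partial>lborel)"
    proof (intro nn_integral_mono)
      fix t :: real
      show "\<Phi> t * indicator {..T} t \<le> (ennreal K * M) * (ennreal (t powr (\<epsilon> / N - 1)) * indicator {0<..T} t)"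
      proof (cases "0 < t \<and> t \<le> T")
        case False
        then show ?thesis
          by (cases "t \<le> 0") (auto simp: \<Phi>_def Fp_nonpos indicator_def)
      next
        case True
        then have t: "0 < t" by simp
        have "\<Phi> t \<le> ennreal (c * t powr (a - 2)) * (ennreal (t * \<rho> t powr (\<epsilon> - \<alpha>)) * M)"
          unfolding \<Phi>_def using Fp_b1[OF t] by (rule mult_left_mono) simp
        also have "\<dots> = ennreal (c * t powr (a - 2) * (t * \<rho> t powr (\<epsilon> - \<alpha>))) * M"
          using c t \<rho>pos[OF t] by (simp add: ennreal_mult mult.assoc)
        also have "c * t powr (a - 2) * (t * \<rho> t powr (\<epsilon> - \<alpha>)) = K * t powr (\<epsilon> / N - 1)"
          unfolding K_def a_def \<rho>_def using R1[OF t \<omega> N] by simp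
        also have "ennreal (K * t powr (\<epsilon> / N - 1)) * M = (ennreal K * M) * (ennreal (t powr (\<epsilon> / N - 1)) * indicator {0<..T} t)"
          using K True by (simp add: ennreal_mult ac_simps)
        finally show ?thesis using True by simp
      qed
    qed
    also have "\<dots> = (ennreal K * M) * ennreal (T powr (\<epsilon> / N - 1 + 1) / (\<epsilon> / N - 1 + 1))"
      using T N \<epsilon> by (subst nn_integral_cmult) (auto simp: nn_powr_from_0)
    also have "\<dots> = ennreal (KK1 DIM('a) \<alpha> \<epsilon> * T powr (\<epsilon> / N)) * M"
    proof -
      have "KK1 DIM('a) \<alpha> \<epsilon> * T powr (\<epsilon> / N) = K * (T powr (\<epsilon> / N - 1 + 1) / (\<epsilon> / N - 1 + 1))"
        unfolding KK1_def K_def c_def \<omega>_def N_def using \<epsilon> by (simp add: field_simps)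
      moreover have "ennreal (K * (T powr (\<epsilon> / N - 1 + 1) / (\<epsilon> / N - 1 + 1)))
          = ennreal K * ennreal (T powr (\<epsilon> / N - 1 + 1) / (\<epsilon> / N - 1 + 1))"
        by (rule ennreal_mult) (use K T \<epsilon> N in auto)
      ultimately show ?thesis by (simp only: ac_simps)
    qed
    finally show ?thesis .
  qed
  show "G \<le> ennreal (KK1 DIM('a) \<alpha> \<epsilon> * T powr (\<epsilon> / real DIM('a))) * M
            + ennreal (KK2 DIM('a) \<alpha> * T powr (- ((real DIM('a) / p - \<alpha>) / real DIM('a)))) * L" if T: "0 < T" for T
  proof -
    define \<kappa> where "\<kappa> = c * T powr (a - 1 / p)"
    have \<kappa>: "0 < \<kappa>" unfolding \<kappa>_def using c T by simp
    have part2: "(\<integral>\<^sup>+t. \<Phi> t * indicator {T<..} t \<partial>lborel) \<le> ennreal \<kappa> * L"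
    proof -
      have "(\<integral>\<^sup>+t. \<Phi> t * indicator {T<..} t \<partial>lborel)
          = ennreal \<kappa> * (\<integral>\<^sup>+t. ennreal (1 / \<kappa>) * (\<Phi> t * indicator {T<..} t) \<partial>lborel)"
      proof -
        have "(\<integral>\<^sup>+t. ennreal (1 / \<kappa>) * (\<Phi> t * indicator {T<..} t) \<partial>lborel)
            = ennreal (1 / \<kappa>) * (\<integral>\<^sup>+t. \<Phi> t * indicator {T<..} t \<partial>lborel)"
          by (rule nn_integral_cmult) measurable
        moreover have "ennreal \<kappa> * ennreal (1 / \<kappa>) = 1" using \<kappa> by (simp add: ennreal_mult[symmetric])
        ultimately show ?thesis by (simp add: mult.assoc[symmetric])
      qed
      also have "\<dots> \<le> ennreal \<kappa> * L"
      proof (rule mult_left_mono)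
        show "(\<integral>\<^sup>+t. ennreal (1 / \<kappa>) * (\<Phi> t * indicator {T<..} t) \<partial>lborel) \<le> L"
          unfolding Leq
        proof (intro nn_integral_mono)
          fix t :: real
          show "ennreal (1 / \<kappa>) * (\<Phi> t * indicator {T<..} t)
              \<le> ennreal (t powr (1 / p)) * rearr2 f t * ennreal (1 / t) * indicator {0<..} t"
          proof (cases "T < t")
            case False
            then show ?thesis by simp
          next
            case True
            then have t: "0 < t" using T by simp
            have "ennreal (1 / \<kappa>) * \<Phi> t \<le> ennreal (1 / \<kappa>) * (ennreal (c * t powr (a - 2)) * (ennreal t * rearr2 f t))"
              unfolding \<Phi>_def using Fp_b2[OF t] by (intro mult_left_mono) auto
            also have "\<dots> = ennreal (1 / \<kappa> * (c * t powr (a - 2)) * t) * rearr2 f t"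
            proof -
              have e: "ennreal (1 / \<kappa> * (c * t powr (a - 2)) * t) = ennreal (1 / \<kappa>) * ennreal (c * t powr (a - 2)) * ennreal t"
                by (rule ennreal_mult3) (use \<kappa> c t in auto)
              show ?thesis unfolding e by (simp only: mult.assoc)
            qed
            also have "\<dots> \<le> ennreal (t powr (1 / p) * (1 / t)) * rearr2 f t"
              unfolding \<kappa>_def using R2[OF T True ap c] by (intro mult_right_mono ennreal_leI) auto
            also have "\<dots> = ennreal (t powr (1 / p)) * rearr2 f t * ennreal (1 / t) * indicator {0<..} t"
            proof -
              have e: "ennreal (t powr (1 / p) * (1 / t)) = ennreal (t powr (1 / p)) * ennreal (1 / t)"
                by (rule ennreal_mult) (use t in auto)
              have i: "indicator {0<..} t = (1::ennreal)" using t by simp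
              show ?thesis unfolding e i by (simp only: ac_simps mult_1_right mult_1_left)
            qed
            finally show ?thesis using True by simp
          qed
        qed
      qed simp
      finally show ?thesis .
    qed
    have "G \<le> (\<integral>\<^sup>+t. \<Phi> t \<partial>lborel)" by (rule G_le)
    also have "\<dots> \<le> ennreal (KK1 DIM('a) \<alpha> \<epsilon> * T powr (\<epsilon> / N)) * M + ennreal \<kappa> * L"
      unfolding split[of T] using part1[OF T] part2 by (rule add_mono)
    also have "\<kappa> = KK2 DIM('a) \<alpha> * T powr (- ((real DIM('a) / p - \<alpha>) / real DIM('a)))"
    proof -
      have "a - 1 / p = - ((real DIM('a) / p - \<alpha>) / real DIM('a))"
        unfolding a_def N_def using p by (simp add: field_simps)
      then show ?thesis unfolding \<kappa>_def c_def by simp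
    qed
    finally show ?thesis unfolding N_def .
  qed
  show "G < \<infinity>" if \<Omega>: "bounded \<Omega>" "\<forall>y. y \<notin> \<Omega> \<longrightarrow> f y = 0" and Mfin: "M < \<infinity>"
  proof -
    obtain R where R: "0 < R" "\<Omega> \<subseteq> ball x R" using bounded_subset_ballD[OF \<Omega>(1)] by blast
    define I where "I = (\<integral>\<^sup>+y. ennreal \<bar>f y\<bar> \<partial>lborel)"
    have "I = (\<integral>\<^sup>+y\<in>ball x R. ennreal \<bar>f y\<bar> \<partial>lborel)"
      unfolding I_def using R \<Omega>(2) by (intro nn_integral_cong) (auto simp: indicator_def)
    also have "\<dots> \<le> ennreal (unit_ball_vol (real DIM('a)) * R ^ DIM('a) * R powr (- (\<alpha> - \<epsilon>))) * M"
      unfolding M_def by (rule ball_bound[OF R(1)])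
    also have "\<dots> < \<infinity>" using Mfin by (simp add: ennreal_mult_less_top)
    finally have Ifin: "I < \<infinity>" .
    have p2: "(\<integral>\<^sup>+t. \<Phi> t * indicator {1<..} t \<partial>lborel)
        \<le> (\<integral>\<^sup>+t. (ennreal c * I) * (ennreal (t powr (a - 2)) * indicator {1<..} t) \<partial>lborel)"
    proof (intro nn_integral_mono)
      fix t :: real
      have "\<Phi> t \<le> ennreal (c * t powr (a - 2)) * I" unfolding \<Phi>_def I_def
        by (intro mult_left_mono Fp_le_I) simp
      also have "\<dots> = (ennreal c * I) * ennreal (t powr (a - 2))"
        using c by (simp add: ennreal_mult ac_simps)
      finally show "\<Phi> t * indicator {1<..} t \<le> (ennreal c * I) * (ennreal (t powr (a - 2)) * indicator {1<..} t)"
        by (auto simp: indicator_def)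
    qed
    also have "\<dots> = (ennreal c * I) * ennreal (- (1 powr (a - 2 + 1)) / (a - 2 + 1))"
      using a by (subst nn_integral_cmult) (auto simp: nn_powr_to_inf)
    also have "\<dots> < \<infinity>" using Ifin by (simp add: ennreal_mult_less_top)
    finally have p2fin: "(\<integral>\<^sup>+t. \<Phi> t * indicator {1<..} t \<partial>lborel) < \<infinity>" .
    have p1fin: "(\<integral>\<^sup>+t. \<Phi> t * indicator {..1} t \<partial>lborel) < \<infinity>"
      using part1[of 1] Mfin by (simp add: ennreal_mult_less_top order.strict_trans1)
    have "G \<le> (\<integral>\<^sup>+t. \<Phi> t \<partial>lborel)" by (rule G_le)
    also have "\<dots> < \<infinity>" unfolding split[of 1] using p1fin p2fin by simp
    finally show ?thesis .
  qed
qed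

theorem lemma3p4:
  fixes \<alpha> \<epsilon> :: real
  assumes "0 < \<alpha>" "\<alpha> < real DIM('a::euclidean_space)"
    and "0 < \<epsilon>" "\<epsilon> < \<alpha>"
  shows "\<exists>C>0. \<forall>(\<Omega>::'a set) (q::ennreal) (f::'a \<Rightarrow> real) (p::real) (x::'a).
     open \<Omega> \<longrightarrow> bounded \<Omega> \<longrightarrow> 1 < q \<longrightarrow>
     f \<in> borel_measurable lborel \<longrightarrow> (\<forall>y. y \<notin> \<Omega> \<longrightarrow> f y = 0) \<longrightarrow>
     lorentz_norm (real DIM('a) / \<alpha>) q f < \<infinity> \<longrightarrow>
     (real DIM('a) / \<alpha> + 1) / 2 \<le> p \<longrightarrow> p < real DIM('a) / \<alpha> \<longrightarrow>
     (let \<delta> = real DIM('a) / p - \<alpha> in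
       (frac_maximal (\<alpha> - \<epsilon>) f x < \<infinity> \<longrightarrow>
          integrable lborel (\<lambda>y. f y / norm (x - y) powr (real DIM('a) - \<alpha>))) \<and>
       ennreal \<bar>riesz_potential \<alpha> f x\<bar> \<le>
         ennreal C * epowr (frac_maximal (\<alpha> - \<epsilon>) f x) (\<delta> / (\<delta> + \<epsilon>))
                   * epowr (lorentz_norm p 1 f) (\<epsilon> / (\<epsilon> + \<delta>)))"
proof -
  define N where "N = real DIM('a)"
  have N: "0 < N" unfolding N_def by simp
  define K1 where "K1 = KK1 DIM('a) \<alpha> \<epsilon>"
  define K2 where "K2 = KK2 DIM('a) \<alpha>"
  have K1: "0 < K1" unfolding K1_def using assms by (intro KK1_pos) auto
  have K2: "0 < K2" unfolding K2_def using assms by (intro KK2_pos) auto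
  define g where "g = riesz_const (real DIM('a)) \<alpha>"
  define C where "C = (\<bar>1 / g\<bar> + 1) * (2 * max K1 K2)"
  have C: "0 < C"
  proof -
    have "0 < \<bar>1 / g\<bar> + 1" by (simp add: add_nonneg_pos)
    moreover have "0 < 2 * max K1 K2" using K1 K2 by simp
    ultimately show ?thesis unfolding C_def by (rule mult_pos_pos)
  qed
  show ?thesis
  proof (intro exI[of _ C] conjI allI impI)
    show "0 < C" by (rule C)
  next
    fix \<Omega> :: "'a set" and q :: ennreal and f :: "'a \<Rightarrow> real" and p :: real and x :: 'a
    assume \<Omega>o: "open \<Omega>" and \<Omega>b: "bounded \<Omega>" and q: "1 < q"
      and f: "f \<in> borel_measurable lborel" and f0: "\<forall>y. y \<notin> \<Omega> \<longrightarrow> f y = 0"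
      and Lq: "lorentz_norm (real DIM('a) / \<alpha>) q f < \<infinity>"
      and p1: "(real DIM('a) / \<alpha> + 1) / 2 \<le> p" and p2: "p < real DIM('a) / \<alpha>"
    have Na: "1 < real DIM('a) / \<alpha>" using assms by (simp add: field_simps)
    have p: "1 < p" "p < real DIM('a) / \<alpha>" using p1 p2 Na by auto
    define \<delta> where "\<delta> = real DIM('a) / p - \<alpha>"
    have \<delta>: "0 < \<delta>"
    proof -
      have "\<alpha> * p < real DIM('a)" using p assms by (simp add: field_simps)
      then show ?thesis unfolding \<delta>_def using p by (simp add: field_simps)
    qed
    define G where "G = (\<integral>\<^sup>+y. ennreal (\<bar>f y\<bar> / norm (x - y) powr (real DIM('a) - \<alpha>)) \<partial>lborel)"
    define M where "M = frac_maximal (\<alpha> - \<epsilon>) f x"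
    define L where "L = lorentz_norm p 1 f"
    note est = main_est[OF f assms p, where x=x, folded G_def M_def L_def]
    have Gbound: "G \<le> ennreal (2 * max K1 K2) * epowr M ((\<delta> / N) / (\<epsilon> / N + \<delta> / N)) * epowr L ((\<epsilon> / N) / (\<epsilon> / N + \<delta> / N))"
    proof (rule optimize[OF K1 K2])
      show "0 < \<epsilon> / N" "0 < \<delta> / N" using assms \<delta> N by auto
      show "G \<le> ennreal (K1 * T powr (\<epsilon> / N)) * M + ennreal (K2 * T powr (- (\<delta> / N))) * L" if "0 < T" for T
        using est(1)[OF that] unfolding K1_def K2_def N_def \<delta>_def .
      show "M = 0 \<or> L = 0 \<Longrightarrow> G = 0" by (rule est(2))
    qed
    have e1: "(\<delta> / N) / (\<epsilon> / N + \<delta> / N) = \<delta> / (\<delta> + \<epsilon>)" using N \<delta> assms by (simp add: field_simps)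
    have e2: "(\<epsilon> / N) / (\<epsilon> / N + \<delta> / N) = \<epsilon> / (\<epsilon> + \<delta>)" using N \<delta> assms by (simp add: field_simps)
    have Gbound': "G \<le> ennreal (2 * max K1 K2) * epowr M (\<delta> / (\<delta> + \<epsilon>)) * epowr L (\<epsilon> / (\<epsilon> + \<delta>))"
      using Gbound unfolding e1 e2 .
    have meas: "(\<lambda>y. f y / norm (x - y) powr (real DIM('a) - \<alpha>)) \<in> borel_measurable lborel"
      using f by measurable
    have normeq: "(\<integral>\<^sup>+y. ennreal (norm (f y / norm (x - y) powr (real DIM('a) - \<alpha>))) \<partial>lborel) = G"
      unfolding G_def by (intro nn_integral_cong) (simp add: abs_divide)
    have int: "integrable lborel (\<lambda>y. f y / norm (x - y) powr (real DIM('a) - \<alpha>))" if "M < \<infinity>"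
      using est(3)[OF \<Omega>b f0 that] meas normeq by (intro integrableI_bounded) auto
    have intbound: "ennreal \<bar>integral\<^sup>L lborel (\<lambda>y. f y / norm (x - y) powr (real DIM('a) - \<alpha>))\<bar> \<le> G"
    proof (cases "integrable lborel (\<lambda>y. f y / norm (x - y) powr (real DIM('a) - \<alpha>))")
      case True
      from integral_norm_bound_ennreal[OF True] show ?thesis unfolding normeq by simp
    next
      case False
      then show ?thesis by (simp add: not_integrable_integral_eq)
    qed
    have "ennreal \<bar>riesz_potential \<alpha> f x\<bar> = ennreal \<bar>1 / g\<bar> * ennreal \<bar>integral\<^sup>L lborel (\<lambda>y. f y / norm (x - y) powr (real DIM('a) - \<alpha>))\<bar>"
    proof -
      have "\<bar>riesz_potential \<alpha> f x\<bar> = \<bar>1 / g\<bar> * \<bar>integral\<^sup>L lborel (\<lambda>y. f y / norm (x - y) powr (real DIM('a) - \<alpha>))\<bar>"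
        unfolding riesz_potential_def g_def by (simp only: abs_mult)
      then show ?thesis by (simp only: ennreal_mult[OF abs_ge_zero abs_ge_zero])
    qed
    also have "\<dots> \<le> ennreal \<bar>1 / g\<bar> * G" using intbound by (rule mult_left_mono) simp
    also have "\<dots> \<le> ennreal \<bar>1 / g\<bar> * (ennreal (2 * max K1 K2) * epowr M (\<delta> / (\<delta> + \<epsilon>)) * epowr L (\<epsilon> / (\<epsilon> + \<delta>)))"
      using Gbound' by (rule mult_left_mono) simp
    also have "\<dots> = ennreal (\<bar>1 / g\<bar> * (2 * max K1 K2)) * epowr M (\<delta> / (\<delta> + \<epsilon>)) * epowr L (\<epsilon> / (\<epsilon> + \<delta>))"
    proof -
      have "ennreal (\<bar>1 / g\<bar> * (2 * max K1 K2)) = ennreal \<bar>1 / g\<bar> * ennreal (2 * max K1 K2)"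
        by (rule ennreal_mult) (use K1 K2 in auto)
      then show ?thesis by (simp only: mult.assoc)
    qed
    also have "\<dots> \<le> ennreal C * epowr M (\<delta> / (\<delta> + \<epsilon>)) * epowr L (\<epsilon> / (\<epsilon> + \<delta>))"
      unfolding C_def using K1 K2 by (intro mult_right_mono ennreal_leI) (auto simp: distrib_right)
    finally have bound: "ennreal \<bar>riesz_potential \<alpha> f x\<bar> \<le> ennreal C * epowr M (\<delta> / (\<delta> + \<epsilon>)) * epowr L (\<epsilon> / (\<epsilon> + \<delta>))" .
    show "let \<delta> = real DIM('a) / p - \<alpha> in
       (frac_maximal (\<alpha> - \<epsilon>) f x < \<infinity> \<longrightarrow>
          integrable lborel (\<lambda>y. f y / norm (x - y) powr (real DIM('a) - \<alpha>))) \<and>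
       ennreal \<bar>riesz_potential \<alpha> f x\<bar> \<le>
         ennreal C * epowr (frac_maximal (\<alpha> - \<epsilon>) f x) (\<delta> / (\<delta> + \<epsilon>))
                   * epowr (lorentz_norm p 1 f) (\<epsilon> / (\<epsilon> + \<delta>))"
      unfolding Let_def \<delta>_def[symmetric] M_def[symmetric] L_def[symmetric] using int bound by blast
  qed
qed

end
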